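(* Let $S$ be a semigroup with a zero element, defined by the finite complete semigroup presentation $\langle X\mid R\rangle$. Let $0$ be a symbol not in $X$ and let $z\in X^+$ be the $R$-irreducible word representing the zero of $S$. Then the rewriting system on $X\cup\{0\}$ $$R_0=R\cup\{(z,0)\}\cup\{(0x,0),(x0,0): x\in X\cup\{0\}\}$$ is finite and complete and defines $S$. Moreover, in this rewriting system the word $0$ is the irreducible word representing the zero of $S$.
   Context: A rewriting system $\langle X\mid R\rangle$ is a set $R$ of pairs $(u,v)$ (rules $u\to v$) of words $u,v\in X^+$; it is finite if $X$ and $R$ are finite. One-step reduction: $w_1uw_2\to_R w_1vw_2$ for $(u,v)\in R$, $w_1,w_2\in X^*$; $\to_R^*$ is its reflexive transitive closure. A word is $R$-irreducible if no rule applies to it. $R$ is noetherian if there is no infinite chain $w_1\to_R w_2\to_R\cdots$, confluent if $u\to_R^*v$ and $u\to_R^*v'$ imply a $w$ with $v\to_R^*w$, $v'\to_R^*w$, and complete if both; in a complete system each congruence class contains exactly one irreducible word. The semigroup defined by $\langle X\mid R\rangle$ is $X^+$ modulo the congruence generated by $R$. *)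

theory Defs
  imports Main
begin

definition words :: "'a set \<Rightarrow> 'a list set" where
  "words X = {w. w \<noteq> [] \<and> set w \<subseteq> X}"

definition rewriting_system :: "'a set \<Rightarrow> ('a list \<times> 'a list) set \<Rightarrow> bool" where
  "rewriting_system X R \<longleftrightarrow> (\<forall>(u,v)\<in>R. u \<in> words X \<and> v \<in> words X)"

definition finite_rs :: "'a set \<Rightarrow> ('a list \<times> 'a list) set \<Rightarrow> bool" where
  "finite_rs X R \<longleftrightarrow> finite X \<and> finite R"

definition step :: "('a list \<times> 'a list) set \<Rightarrow> ('a list \<times> 'a list) set" where
  "step R = {(w1 @ u @ w2, w1 @ v @ w2) | w1 u v w2. (u, v) \<in> R}"

definition irreducible :: "('a list \<times> 'a list) set \<Rightarrow> 'a list \<Rightarrow> bool" where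
  "irreducible R w \<longleftrightarrow> (\<nexists>w'. (w, w') \<in> step R)"

definition noetherian :: "'a set \<Rightarrow> ('a list \<times> 'a list) set \<Rightarrow> bool" where
  "noetherian X R \<longleftrightarrow>
     \<not> (\<exists>f :: nat \<Rightarrow> 'a list. f 0 \<in> words X \<and> (\<forall>i. (f i, f (Suc i)) \<in> step R))"

definition confluent :: "'a set \<Rightarrow> ('a list \<times> 'a list) set \<Rightarrow> bool" where
  "confluent X R \<longleftrightarrow>
     (\<forall>u \<in> words X. \<forall>v v'. (u, v) \<in> (step R)\<^sup>* \<and> (u, v') \<in> (step R)\<^sup>* \<longrightarrow>
        (\<exists>w. (v, w) \<in> (step R)\<^sup>* \<and> (v', w) \<in> (step R)\<^sup>*))"

definition complete :: "'a set \<Rightarrow> ('a list \<times> 'a list) set \<Rightarrow> bool" where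
  "complete X R \<longleftrightarrow> noetherian X R \<and> confluent X R"

text \<open>The congruence on X^+ generated by R (its classes are the elements of the
  semigroup defined by the presentation).\<close>
definition cong_rel :: "'a set \<Rightarrow> ('a list \<times> 'a list) set \<Rightarrow> ('a list \<times> 'a list) set" where
  "cong_rel X R = ((step R \<union> (step R)\<inverse>) \<inter> (words X \<times> words X))\<^sup>* \<inter> (words X \<times> words X)"

definition represents_zero :: "'a set \<Rightarrow> ('a list \<times> 'a list) set \<Rightarrow> 'a list \<Rightarrow> bool" where
  "represents_zero X R z \<longleftrightarrow> z \<in> words X \<and>
     (\<forall>w \<in> words X. (w @ z, z) \<in> cong_rel X R \<and> (z @ w, z) \<in> cong_rel X R)"

text \<open>The extended system R_0 on X \<union> {c0}, where c0 plays the role of the new symbol 0.\<close>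
definition R0 :: "'a set \<Rightarrow> ('a list \<times> 'a list) set \<Rightarrow> 'a list \<Rightarrow> 'a \<Rightarrow> ('a list \<times> 'a list) set" where
  "R0 X R z c0 = R \<union> {(z, [c0])} \<union> {([c0, x], [c0]) | x. x \<in> X \<union> {c0}}
                  \<union> {([x, c0], [c0]) | x. x \<in> X \<union> {c0}}"

end

theory Submission
  imports Defs "HOL-Library.Multiset"
begin

lemma step_iff: "(a,b) \<in> step R \<longleftrightarrow> (\<exists>w1 u v w2. a = w1@u@w2 \<and> b = w1@v@w2 \<and> (u,v)\<in>R)"
  unfolding step_def by blast

lemma stepI: "(u,v) \<in> R \<Longrightarrow> (w1@u@w2, w1@v@w2) \<in> step R"
  unfolding step_def by blast

lemma step_ctx: "(a,b) \<in> step R \<Longrightarrow> (p@a@q, p@b@q) \<in> step R"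
proof -
  assume "(a,b) \<in> step R"
  then obtain w1 u v w2 where "a = w1@u@w2" "b = w1@v@w2" "(u,v)\<in>R" unfolding step_iff by blast
  then show ?thesis using stepI[of u v R "p@w1" "w2@q"] by simp
qed

lemma steps_ctx: "(a,b) \<in> (step R)\<^sup>* \<Longrightarrow> (p@a@q, p@b@q) \<in> (step R)\<^sup>*"
  by (induction rule: rtrancl_induct) (auto intro: rtrancl_into_rtrancl step_ctx)

lemma step_mono: "R \<subseteq> R' \<Longrightarrow> step R \<subseteq> step R'"
  unfolding step_def by blast

lemma step_set: "rewriting_system Y R \<Longrightarrow> (a,b) \<in> step R \<Longrightarrow> set a \<subseteq> Y \<Longrightarrow> set b \<subseteq> Y"
  unfolding step_iff rewriting_system_def words_def by fastforce

lemma step_ne: "rewriting_system Y R \<Longrightarrow> (a,b) \<in> step R \<Longrightarrow> a \<noteq> [] \<and> b \<noteq> []"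
  unfolding step_iff rewriting_system_def words_def by fastforce

lemma step_words: "rewriting_system Y R \<Longrightarrow> (a,b) \<in> step R \<Longrightarrow> a \<in> words Y \<Longrightarrow> b \<in> words Y"
  using step_set step_ne unfolding words_def by blast

lemma steps_words: assumes "rewriting_system Y R" "(a,b) \<in> (step R)\<^sup>*" "a \<in> words Y" shows "b \<in> words Y"
  using assms(2,3) by (induction rule: rtrancl_induct) (auto intro: step_words[OF assms(1)])

lemma cong_sym: "(a,b) \<in> cong_rel Y Q \<Longrightarrow> (b,a) \<in> cong_rel Y Q"
proof -
  let ?E = "(step Q \<union> (step Q)\<inverse>) \<inter> (words Y \<times> words Y)"
  have "?E\<inverse> = ?E" by auto
  assume "(a,b) \<in> cong_rel Y Q"
  then have "(a,b) \<in> ?E\<^sup>*" "a \<in> words Y" "b \<in> words Y" unfolding cong_rel_def by auto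
  then have "(b,a) \<in> (?E\<inverse>)\<^sup>*" by (simp add: rtrancl_converse)
  then have "(b,a) \<in> ?E\<^sup>*" using \<open>?E\<inverse> = ?E\<close> by simp
  then show ?thesis unfolding cong_rel_def using \<open>a \<in> words Y\<close> \<open>b \<in> words Y\<close> by blast
qed

lemma cong_trans: "(a,b) \<in> cong_rel Y Q \<Longrightarrow> (b,c) \<in> cong_rel Y Q \<Longrightarrow> (a,c) \<in> cong_rel Y Q"
  unfolding cong_rel_def using rtrancl_trans by fastforce

lemma cong_refl: "a \<in> words Y \<Longrightarrow> (a,a) \<in> cong_rel Y Q"
  unfolding cong_rel_def by blast

lemma steps_cong: assumes "rewriting_system Y Q" "(a,b) \<in> (step Q)\<^sup>*" "a \<in> words Y"
  shows "(a,b) \<in> cong_rel Y Q"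
  using assms(2,3)
proof (induction rule: rtrancl_induct)
  case base then show ?case by (rule cong_refl)
next
  case (step y z)
  have "y \<in> words Y" using steps_words[OF assms(1) step.hyps(1) step.prems] .
  then have "z \<in> words Y" using step_words[OF assms(1) step.hyps(2)] by blast
  then have "(y,z) \<in> cong_rel Y Q" unfolding cong_rel_def using \<open>y \<in> words Y\<close> step.hyps(2) by blast
  then show ?case using cong_trans step.IH step.prems by blast
qed

lemma words_app: "set p \<subseteq> Y \<Longrightarrow> set q \<subseteq> Y \<Longrightarrow> a \<in> words Y \<Longrightarrow> p@a@q \<in> words Y"
  unfolding words_def by auto

lemma cong_ctx: assumes "(a,b) \<in> cong_rel Y Q" "set p \<subseteq> Y" "set q \<subseteq> Y"
  shows "(p@a@q, p@b@q) \<in> cong_rel Y Q"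
proof -
  let ?E = "(step Q \<union> (step Q)\<inverse>) \<inter> (words Y \<times> words Y)"
  have "(a,b) \<in> ?E\<^sup>*" "a \<in> words Y" "b \<in> words Y" using assms(1) unfolding cong_rel_def by auto
  have "(p@a@q, p@b@q) \<in> ?E\<^sup>*" using \<open>(a,b) \<in> ?E\<^sup>*\<close>
  proof (induction rule: rtrancl_induct)
    case base then show ?case by simp
  next
    case (step y z)
    have "(p@y@q, p@z@q) \<in> ?E" using step.hyps(2) step_ctx[of _ _ Q p q] words_app[OF assms(2,3)] by blast
    then show ?case using step.IH by (meson rtrancl.rtrancl_into_rtrancl)
  qed
  then show ?thesis unfolding cong_rel_def using words_app[OF assms(2,3)] \<open>a \<in> words Y\<close> \<open>b \<in> words Y\<close> by blast
qed

lemma noeth_wf: assumes "rewriting_system Y R" "noetherian Y R"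
  shows "wf {(t,s). s \<in> words Y \<and> (s,t) \<in> step R}"
proof (rule ccontr)
  assume "\<not> ?thesis"
  then obtain f where f: "\<And>i. (f (Suc i), f i) \<in> {(t,s). s \<in> words Y \<and> (s,t) \<in> step R}"
    unfolding wf_iff_no_infinite_down_chain by blast
  then have "f 0 \<in> words Y \<and> (\<forall>i. (f i, f (Suc i)) \<in> step R)" by blast
  then show False using assms(2) unfolding noetherian_def by blast
qed

lemma nf_exists: assumes "wf {(t,s). s \<in> words Y \<and> (s,t) \<in> step R}" "rewriting_system Y R" "s \<in> words Y"
  shows "\<exists>n. (s,n) \<in> (step R)\<^sup>* \<and> irreducible R n"
  using assms(3)
proof (induction s rule: wf_induct[OF assms(1)])
  case (1 s)
  show ?case
  proof (cases "irreducible R s")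
    case True then show ?thesis by blast
  next
    case False
    then obtain s' where s': "(s,s') \<in> step R" unfolding irreducible_def by blast
    then have "s' \<in> words Y" using step_words[OF assms(2)] 1(2) by blast
    then obtain n where "(s',n) \<in> (step R)\<^sup>*" "irreducible R n" using 1(1) s' 1(2) by blast
    then show ?thesis using s' by (meson converse_rtrancl_into_rtrancl)
  qed
qed

lemma irred_steps: "irreducible R a \<Longrightarrow> (a,b) \<in> (step R)\<^sup>* \<Longrightarrow> b = a"
  unfolding irreducible_def by (metis converse_rtranclE)

fun segs :: "'a \<Rightarrow> 'a list \<Rightarrow> 'a list list" where
  "segs c [] = [[]]"
| "segs c (x#w) = (if x = c then [] # segs c w else (x # hd (segs c w)) # tl (segs c w))"

lemma segs_ne[simp]: "segs c w \<noteq> []"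
  by (induction w) auto

lemma segs_append: "segs c (u@v) = butlast (segs c u) @ [last (segs c u) @ hd (segs c v)] @ tl (segs c v)"
proof (induction u)
  case Nil then show ?case by (cases "segs c v") auto
next
  case (Cons x u)
  show ?case
  proof (cases "x = c")
    case True then show ?thesis using Cons by simp
  next
    case False
    obtain ys y where yy: "segs c u = ys @ [y]" by (metis segs_ne rev_exhaust)
    show ?thesis
    proof (cases ys)
      case Nil then show ?thesis using Cons False yy by simp
    next
      case (Cons y0 ys') then show ?thesis using Cons.IH False yy by (simp add: butlast_append)
    qed
  qed
qed

lemma segs_free: "c \<notin> set u \<Longrightarrow> segs c u = [u]"
  by (induction u) auto

lemma segs_c: "segs c (w1 @ c # w2) = segs c w1 @ segs c w2"
  using segs_append[of c w1 "c # w2"] by simp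

lemma segs_mid: "c \<notin> set u \<Longrightarrow> segs c (w1 @ u @ w2) =
   butlast (segs c w1) @ [last (segs c w1) @ u @ hd (segs c w2)] @ tl (segs c w2)"
  using segs_append[of c w1 "u @ w2"] segs_append[of c u w2] segs_free[of c u] by simp

lemma segs_set: "s \<in> set (segs c w) \<Longrightarrow> set s \<subseteq> set w - {c}"
proof (induction w arbitrary: s)
  case Nil then show ?case by simp
next
  case (Cons x w)
  show ?case
  proof (cases "x = c")
    case True then show ?thesis using Cons by auto
  next
    case False
    have hd: "hd (segs c w) \<in> set (segs c w)" by simp
    have tl: "\<And>t. t \<in> set (tl (segs c w)) \<Longrightarrow> t \<in> set (segs c w)"
      by (metis list.sel(3) list.set_sel(2) segs_ne)
    have "set (hd (segs c w)) \<subseteq> set w - {c}" using Cons.IH hd by blast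
    have "s = x # hd (segs c w) \<or> s \<in> set (tl (segs c w))" using Cons.prems False by auto
    then show ?thesis
    proof
      assume "s = x # hd (segs c w)"
      then show ?thesis using \<open>set (hd (segs c w)) \<subseteq> set w - {c}\<close> False by auto
    next
      assume "s \<in> set (tl (segs c w))"
      then show ?thesis using Cons.IH tl by fastforce
    qed
  qed
qed

lemma mult1_repl: assumes "\<And>k. k \<in> set K \<Longrightarrow> (k,s) \<in> r"
  shows "(mset (P @ K @ Q), mset (P @ [s] @ Q)) \<in> mult1 r"
proof -
  have "mset (P@[s]@Q) = add_mset s (mset (P@Q))" "mset (P@K@Q) = mset (P@Q) + mset K" by simp_all
  moreover have "\<forall>b. b \<in># mset K \<longrightarrow> (b,s) \<in> r" using assms by simp
  ultimately show ?thesis unfolding mult1_def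
    apply (simp del: mset_append)
    apply (rule exI[of _ s], rule exI[of _ "mset (P@Q)"])
    by simp
qed

lemma wf_G: assumes rs: "rewriting_system X R" and no: "noetherian X R"
  shows "wf {(t,s). set s \<subseteq> X \<and> ((s,t) \<in> step R \<or> (\<exists>p q. s = p@t@q \<and> p@q \<noteq> []))}"
proof -
  define Rr where "Rr = {(t,s). set s \<subseteq> X \<and> (s,t) \<in> step R}"
  define Fr where "Fr = {(t,s). set s \<subseteq> X \<and> (\<exists>p q. s = p@t@q \<and> p@q \<noteq> [])}"
  have "Rr \<subseteq> {(t,s). s \<in> words X \<and> (s,t) \<in> step R}"
    unfolding Rr_def words_def using step_ne[OF rs] by blast
  then have wR: "wf Rr" using wf_subset[OF noeth_wf[OF rs no]] by blast
  have "Fr \<subseteq> measure length" unfolding Fr_def by auto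
  then have wF: "wf Fr" using wf_subset by blast
  have qc: "Rr O Fr \<subseteq> (Rr \<union> Fr)\<^sup>* O Rr"
  proof
    fix a assume "a \<in> Rr O Fr"
    then obtain x y z where a: "a = (x,z)" "(x,y) \<in> Rr" "(y,z) \<in> Fr" by blast
    then obtain p q where z: "z = p@y@q" "p@q \<noteq> []" "set z \<subseteq> X" unfolding Fr_def by blast
    have yx: "(y,x) \<in> step R" using a(2) unfolding Rr_def by blast
    have mz: "(p@x@q, z) \<in> Rr" unfolding Rr_def using z step_ctx[OF yx] by blast
    have "set (p@x@q) \<subseteq> X" using step_set[OF rs step_ctx[OF yx, of p q]] z by simp
    then have "(x, p@x@q) \<in> Fr" unfolding Fr_def using z(2) by blast
    then show "a \<in> (Rr \<union> Fr)\<^sup>* O Rr" using mz a(1) by blast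
  qed
  have w1: "wf (Fr\<^sup>* O Rr O Fr\<^sup>*)" using qc_wf_relto_iff[OF qc] wR by blast
  have "(Fr\<^sup>* O Rr O Fr\<^sup>*) O Fr \<subseteq> Fr\<^sup>* O Rr O Fr\<^sup>*"
    by (auto intro: rtrancl_into_rtrancl)
  then have w2: "wf ((Fr\<^sup>* O Rr O Fr\<^sup>*) \<union> Fr)" using wf_union_compatible[OF w1 wF] by blast
  have "{(t,s). set s \<subseteq> X \<and> ((s,t) \<in> step R \<or> (\<exists>p q. s = p@t@q \<and> p@q \<noteq> []))}
     \<subseteq> (Fr\<^sup>* O Rr O Fr\<^sup>*) \<union> Fr" unfolding Rr_def Fr_def by blast
  then show ?thesis using wf_subset[OF w2] by blast
qed

definition Grel :: "'a set \<Rightarrow> ('a list \<times> 'a list) set \<Rightarrow> ('a list \<times> 'a list) set" where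
  "Grel X R = {(t,s). set s \<subseteq> X \<and> ((s,t) \<in> step R \<or> (\<exists>p q. s = p@t@q \<and> p@q \<noteq> []))}"

locale P21 =
  fixes X :: "'a set" and R :: "('a list \<times> 'a list) set" and z :: "'a list" and c0 :: 'a
  assumes rs: "rewriting_system X R" and fin: "finite_rs X R" and comp: "complete X R"
    and c0: "c0 \<notin> X" and zero: "represents_zero X R z" and irr: "irreducible R z"
begin

abbreviation "Y \<equiv> X \<union> {c0}"
abbreviation "Q \<equiv> R0 X R z c0"

lemma z_words: "z \<in> words X" using zero unfolding represents_zero_def by blast
lemma c0_z: "c0 \<notin> set z" using z_words c0 unfolding words_def by blast

lemma R_words: "(u,v) \<in> R \<Longrightarrow> u \<in> words X \<and> v \<in> words X"
  using rs unfolding rewriting_system_def by blast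

lemma Q_cases: "(u,v) \<in> Q \<Longrightarrow> (u,v) \<in> R \<or> (u = z \<and> v = [c0]) \<or> (\<exists>x\<in>Y. u = [c0,x] \<and> v = [c0])
   \<or> (\<exists>x\<in>Y. u = [x,c0] \<and> v = [c0])"
  unfolding R0_def by blast

lemma rsQ: "rewriting_system Y Q"
  unfolding rewriting_system_def
proof safe
  fix u v assume "(u,v) \<in> Q"
  then show "u \<in> words Y" "v \<in> words Y" using Q_cases[of u v] R_words z_words unfolding words_def by auto
qed

lemma finQ: "finite_rs Y Q"
proof -
  have fX: "finite X" "finite R" using fin unfolding finite_rs_def by auto
  have "{([c0, x], [c0]) | x. x \<in> Y} = (\<lambda>x. ([c0,x],[c0])) ` Y" by blast
  moreover have "{([x, c0], [c0]) | x. x \<in> Y} = (\<lambda>x. ([x,c0],[c0])) ` Y" by blast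
  ultimately show ?thesis using fX unfolding finite_rs_def R0_def by simp
qed

lemma segs_X: "s \<in> set (segs c0 w) \<Longrightarrow> set w \<subseteq> Y \<Longrightarrow> set s \<subseteq> X"
  using segs_set[of s c0 w] by blast

lemma butlast_last_segs: "segs c w1 = butlast (segs c w1) @ [last (segs c w1)]"
  by simp

lemma hd_tl_segs: "segs c w2 = hd (segs c w2) # tl (segs c w2)"
  by simp

lemma Grel_fac: "set (p@t@q) \<subseteq> X \<Longrightarrow> p@q \<noteq> [] \<Longrightarrow> (t, p@t@q) \<in> Grel X R"
  unfolding Grel_def by blast

lemma step_mult1: assumes w: "set w \<subseteq> Y" and st: "(w,w') \<in> step Q"
  shows "(mset (segs c0 w'), mset (segs c0 w)) \<in> mult1 (Grel X R)"
proof -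
  obtain w1 u v w2 where ww: "w = w1@u@w2" "w' = w1@v@w2" and uv: "(u,v) \<in> Q"
    using st unfolding step_iff by blast
  define A where "A = butlast (segs c0 w1)"
  define a where "a = last (segs c0 w1)"
  define b where "b = hd (segs c0 w2)"
  define B where "B = tl (segs c0 w2)"
  have S1: "segs c0 w1 = A @ [a]" unfolding A_def a_def by simp
  have S2: "segs c0 w2 = b # B" unfolding B_def b_def by simp
  have mem: "\<And>s. s \<in> set (segs c0 w) \<Longrightarrow> set s \<subseteq> X" using segs_X w by blast
  consider "(u,v) \<in> R" | "u = z \<and> v = [c0]" | "u = [c0,c0] \<and> v = [c0]"
    | x where "x \<in> X" "u = [c0,x] \<and> v = [c0]" | x where "x \<in> X" "u = [x,c0] \<and> v = [c0]"
    using Q_cases[OF uv] by blast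
  then show ?thesis
  proof cases
    case 1
    have cu: "c0 \<notin> set u" "c0 \<notin> set v" using R_words[OF 1] c0 unfolding words_def by auto
    have e1: "segs c0 w = A @ [a@u@b] @ B" using segs_mid[OF cu(1), of w1 w2] ww unfolding A_def a_def b_def B_def by simp
    have e2: "segs c0 w' = A @ [a@v@b] @ B" using segs_mid[OF cu(2), of w1 w2] ww unfolding A_def a_def b_def B_def by simp
    have "set (a@u@b) \<subseteq> X" by (rule mem) (simp add: e1)
    moreover have "(a@u@b, a@v@b) \<in> step R" using stepI[OF 1] by blast
    ultimately have "(a@v@b, a@u@b) \<in> Grel X R" unfolding Grel_def by blast
    then show ?thesis unfolding e1 e2 by (intro mult1_repl) simp
  next
    case 2
    have e1: "segs c0 w = A @ [a@z@b] @ B" using segs_mid[OF c0_z, of w1 w2] ww 2 unfolding A_def a_def b_def B_def by simp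
    have e2: "segs c0 w' = A @ [a,b] @ B" using segs_c[of c0 w1 w2] ww 2 S1 S2 by simp
    have sX: "set (a@z@b) \<subseteq> X" by (rule mem) (simp add: e1)
    have zne: "z \<noteq> []" using z_words unfolding words_def by blast
    have "(a, a@z@b) \<in> Grel X R" using Grel_fac[of "[]" a "z@b"] sX zne by simp
    moreover have "(b, a@z@b) \<in> Grel X R" using Grel_fac[of "a@z" b "[]"] sX zne by simp
    ultimately show ?thesis unfolding e1 e2 by (intro mult1_repl) auto
  next
    case 3
    have e1: "segs c0 w = segs c0 w1 @ [[]] @ segs c0 w2" using segs_c[of c0 w1 "c0#w2"] ww 3 by simp
    have e2: "segs c0 w' = segs c0 w1 @ [] @ segs c0 w2" using segs_c[of c0 w1 w2] ww 3 by simp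
    show ?thesis unfolding e1 e2 by (intro mult1_repl) simp
  next
    case (4 x)
    have xc: "x \<noteq> c0" using 4 c0 by blast
    have e1: "segs c0 w = segs c0 w1 @ [x#b] @ B" using segs_c[of c0 w1 "x#w2"] ww 4 xc S2 by simp
    have e2: "segs c0 w' = segs c0 w1 @ [b] @ B" using segs_c[of c0 w1 w2] ww 4 S2 by simp
    have sX: "set (x#b) \<subseteq> X" by (rule mem) (simp add: e1)
    have "(b, x#b) \<in> Grel X R" using Grel_fac[of "[x]" b "[]"] sX by simp
    then show ?thesis unfolding e1 e2 by (intro mult1_repl) simp
  next
    case (5 x)
    have xc: "x \<noteq> c0" using 5 c0 by blast
    have xs: "c0 \<notin> set [x]" using xc by simp
    have e0: "segs c0 (w1@[x]) = A @ [a@[x]]" using segs_mid[OF xs, of w1 "[]"] unfolding A_def a_def by simp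
    have e1: "segs c0 w = A @ [a@[x]] @ segs c0 w2" using segs_c[of c0 "w1@[x]" w2] ww 5 e0 by simp
    have e2: "segs c0 w' = A @ [a] @ segs c0 w2" using segs_c[of c0 w1 w2] ww 5 S1 by simp
    have sX: "set (a@[x]) \<subseteq> X" by (rule mem) (simp add: e1)
    have "(a, a@[x]) \<in> Grel X R" using Grel_fac[of "[]" a "[x]"] sX by simp
    then show ?thesis unfolding e1 e2 by (intro mult1_repl) simp
  qed
qed

lemma noethQ: "noetherian Y Q"
  unfolding noetherian_def
proof
  assume "\<exists>f. f 0 \<in> words Y \<and> (\<forall>i. (f i, f (Suc i)) \<in> step Q)"
  then obtain f where f0: "f 0 \<in> words Y" and fs: "\<And>i. (f i, f (Suc i)) \<in> step Q" by blast
  have fY: "set (f i) \<subseteq> Y" for i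
  proof (induction i)
    case 0 then show ?case using f0 unfolding words_def by blast
  next
    case (Suc i) then show ?case using step_set[OF rsQ fs] by blast
  qed
  have wG: "wf (mult (Grel X R))" using wf_mult[OF wf_G[OF rs]] comp unfolding complete_def Grel_def by blast
  have "(mset (segs c0 (f (Suc i))), mset (segs c0 (f i))) \<in> mult (Grel X R)" for i
    using step_mult1[OF fY fs] unfolding mult_def by blast
  then have "\<exists>g. \<forall>i. (g (Suc i), g i) \<in> mult (Grel X R)"
    by (intro exI[of _ "\<lambda>i. mset (segs c0 (f i))"]) simp
  then show False using wG unfolding wf_iff_no_infinite_down_chain by blast
qed


lemma wfR: "wf {(t,s). s \<in> words X \<and> (s,t) \<in> step R}"
  using noeth_wf[OF rs] comp unfolding complete_def by blast

lemma confR: "confluent X R" using comp unfolding complete_def by blast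

definition nfR :: "'a list \<Rightarrow> 'a list" where
  "nfR w = (SOME n. (w,n) \<in> (step R)\<^sup>* \<and> irreducible R n)"

lemma nfR_prop: "w \<in> words X \<Longrightarrow> (w, nfR w) \<in> (step R)\<^sup>* \<and> irreducible R (nfR w)"
  unfolding nfR_def using nf_exists[OF wfR rs] by (rule someI_ex) 

lemma nfR_unique: assumes "w \<in> words X" "(w,n) \<in> (step R)\<^sup>*" "irreducible R n" shows "n = nfR w"
proof -
  obtain m where "(n,m) \<in> (step R)\<^sup>*" "(nfR w, m) \<in> (step R)\<^sup>*"
    using confR assms nfR_prop[OF assms(1)] unfolding confluent_def by blast
  then show ?thesis using irred_steps assms(3) nfR_prop[OF assms(1)] by metis
qed

lemma cong_nf: assumes "(p,q) \<in> cong_rel X R" shows "nfR p = nfR q"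
proof -
  let ?E = "(step R \<union> (step R)\<inverse>) \<inter> (words X \<times> words X)"
  have "(p,q) \<in> ?E\<^sup>*" "p \<in> words X" using assms unfolding cong_rel_def by auto
  then show ?thesis
  proof (induction rule: rtrancl_induct)
    case base then show ?case by simp
  next
    case (step y y')
    have yw: "y \<in> words X" "y' \<in> words X" using step.hyps(2) by auto
    have "nfR y = nfR y'"
    proof (cases "(y,y') \<in> step R")
      case True
      then have "(y, nfR y') \<in> (step R)\<^sup>*" using nfR_prop[OF yw(2)] by (meson converse_rtrancl_into_rtrancl)
      then show ?thesis using nfR_unique[OF yw(1)] nfR_prop[OF yw(2)] by metis
    next
      case False
      then have "(y',y) \<in> step R" using step.hyps(2) by blast
      then have "(y', nfR y) \<in> (step R)\<^sup>*" using nfR_prop[OF yw(1)] by (meson converse_rtrancl_into_rtrancl)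
      then show ?thesis using nfR_unique[OF yw(2)] nfR_prop[OF yw(1)] by metis
    qed
    then show ?case using step.IH step.prems by simp
  qed
qed

lemma zabs: assumes "set p \<subseteq> X" "set q \<subseteq> X" shows "(p@z@q, z) \<in> cong_rel X R"
proof -
  have zw: "z \<in> words X" by (rule z_words)
  have 1: "(p@z, z) \<in> cong_rel X R"
  proof (cases "p = []")
    case True then show ?thesis using cong_refl[OF zw] by simp
  next
    case False then have "p \<in> words X" using assms unfolding words_def by blast
    then show ?thesis using zero unfolding represents_zero_def by blast
  qed
  have 2: "(z@q, z) \<in> cong_rel X R"
  proof (cases "q = []")
    case True then show ?thesis using cong_refl[OF zw] by simp
  next
    case False then have "q \<in> words X" using assms unfolding words_def by blast
    then show ?thesis using zero unfolding represents_zero_def by blast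
  qed
  have "([]@(p@z)@q, []@z@q) \<in> cong_rel X R" using cong_ctx[OF 1, of "[]" q] assms by simp
  then show ?thesis using cong_trans 2 by fastforce
qed

lemma R_sub_Q: "R \<subseteq> Q" unfolding R0_def by blast

lemma c0_pres: assumes "(w,w') \<in> step Q" "c0 \<in> set w" shows "c0 \<in> set w'"
proof -
  obtain w1 u v w2 where ww: "w = w1@u@w2" "w' = w1@v@w2" and uv: "(u,v) \<in> Q"
    using assms(1) unfolding step_iff by blast
  have "c0 \<in> set u \<Longrightarrow> c0 \<in> set v"
    using Q_cases[OF uv] R_words c0_z c0 unfolding words_def by auto
  then show ?thesis using assms(2) ww by auto
qed

definition inv :: "'a list \<Rightarrow> 'a list" where
  "inv w = (if c0 \<in> set w \<or> (w,z) \<in> cong_rel X R then [c0] else nfR w)"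

lemma inv_step: assumes w: "w \<in> words Y" and st: "(w,w') \<in> step Q" shows "inv w' = inv w"
proof (cases "c0 \<in> set w")
  case True then show ?thesis using c0_pres[OF st] unfolding inv_def by simp
next
  case False
  then have wX: "w \<in> words X" using w unfolding words_def by blast
  obtain w1 u v w2 where ww: "w = w1@u@w2" "w' = w1@v@w2" and uv: "(u,v) \<in> Q"
    using st unfolding step_iff by blast
  have sets: "set w1 \<subseteq> X" "set u \<subseteq> X" "set w2 \<subseteq> X" using wX ww unfolding words_def by auto
  consider "(u,v) \<in> R" | "u = z \<and> v = [c0]" | x where "u = [c0,x] \<or> u = [x,c0]"
    using Q_cases[OF uv] by blast
  then show ?thesis
  proof cases
    case 1
    have st': "(w,w') \<in> step R" using ww stepI[OF 1] by blast
    have wX': "w' \<in> words X" using step_words[OF rs st' wX] .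
    have c': "c0 \<notin> set w'" using wX' c0 unfolding words_def by blast
    have cw: "(w,w') \<in> cong_rel X R" using steps_cong[OF rs _ wX] st' by blast
    have "(w,z) \<in> cong_rel X R \<longleftrightarrow> (w',z) \<in> cong_rel X R"
      using cw cong_sym cong_trans by metis
    moreover have "nfR w = nfR w'" using cong_nf[OF cw] .
    ultimately show ?thesis unfolding inv_def using False c' by simp
  next
    case 2
    have "(w,z) \<in> cong_rel X R" using zabs[OF sets(1,3)] ww 2 by simp
    moreover have "c0 \<in> set w'" using ww 2 by simp
    ultimately show ?thesis unfolding inv_def by simp
  next
    case 3 then show ?thesis using sets(2) c0 by auto
  qed
qed

lemma inv_steps: assumes "(w,w') \<in> (step Q)\<^sup>*" "w \<in> words Y" shows "inv w' = inv w"
  using assms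
proof (induction rule: rtrancl_induct)
  case base then show ?case by simp
next
  case (step y y')
  have "y \<in> words Y" using steps_words[OF rsQ step.hyps(1) step.prems] .
  then show ?case using inv_step step by simp
qed

lemma z_red: "(z,[c0]) \<in> step Q"
  using stepI[of z "[c0]" Q "[]" "[]"] unfolding R0_def by simp

lemma inv_irred: assumes n: "n \<in> words Y" and irrn: "irreducible Q n" shows "inv n = n"
proof (cases "c0 \<in> set n")
  case True
  then obtain p q where pq: "n = p @ c0 # q" by (meson split_list)
  have qn: "q = []"
  proof (rule ccontr)
    assume "q \<noteq> []"
    then obtain x q' where "q = x#q'" by (cases q) auto
    moreover have "x \<in> Y" using n pq calculation unfolding words_def by auto
    ultimately have "(n, p@[c0]@q') \<in> step Q" using pq stepI[of "[c0,x]" "[c0]" Q p q'] unfolding R0_def by auto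
    then show False using irrn unfolding irreducible_def by blast
  qed
  have pn: "p = []"
  proof (rule ccontr)
    assume "p \<noteq> []"
    then obtain x p' where "p = p'@[x]" by (cases p rule: rev_cases) auto
    moreover have "x \<in> Y" using n pq calculation unfolding words_def by auto
    ultimately have "(n, p'@[c0]@[]) \<in> step Q" using pq qn stepI[of "[x,c0]" "[c0]" Q p' "[]"] unfolding R0_def by auto
    then show False using irrn unfolding irreducible_def by blast
  qed
  show ?thesis using pq qn pn unfolding inv_def by simp
next
  case False
  then have nX: "n \<in> words X" using n unfolding words_def by blast
  have irR: "irreducible R n" using irrn step_mono[OF R_sub_Q] unfolding irreducible_def by blast
  have nn: "nfR n = n" using nfR_unique[OF nX _ irR] by simp
  have "(n,z) \<notin> cong_rel X R"
  proof
    assume "(n,z) \<in> cong_rel X R"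
    then have "nfR n = nfR z" by (rule cong_nf)
    moreover have "nfR z = z" using nfR_unique[OF z_words _ irr] by simp
    ultimately have "n = z" using nn by simp
    then show False using irrn z_red unfolding irreducible_def by blast
  qed
  then show ?thesis using False nn unfolding inv_def by simp
qed

lemma confQ: "confluent Y Q"
  unfolding confluent_def
proof (intro ballI allI impI)
  fix u v v' assume u: "u \<in> words Y" and vv: "(u, v) \<in> (step Q)\<^sup>* \<and> (u, v') \<in> (step Q)\<^sup>*"
  have wQ: "wf {(t,s). s \<in> words Y \<and> (s,t) \<in> step Q}" using noeth_wf[OF rsQ noethQ] .
  have v: "v \<in> words Y" "v' \<in> words Y" using steps_words[OF rsQ _ u] vv by auto
  obtain n where n: "(v,n) \<in> (step Q)\<^sup>*" "irreducible Q n" using nf_exists[OF wQ rsQ v(1)] by blast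
  obtain n' where n': "(v',n') \<in> (step Q)\<^sup>*" "irreducible Q n'" using nf_exists[OF wQ rsQ v(2)] by blast
  have nw: "n \<in> words Y" "n' \<in> words Y" using steps_words[OF rsQ] n n' v by auto
  have "inv n = inv u" using inv_steps[OF _ u] vv n by (meson rtrancl_trans)
  moreover have "inv n' = inv u" using inv_steps[OF _ u] vv n' by (meson rtrancl_trans)
  ultimately have "n = n'" using inv_irred nw n n' by metis
  then show "\<exists>w. (v, w) \<in> (step Q)\<^sup>* \<and> (v', w) \<in> (step Q)\<^sup>*" using n n' by blast
qed


definition sub :: "'a list \<Rightarrow> 'a list" where
  "sub w = concat (map (\<lambda>x. if x = c0 then z else [x]) w)"

lemma sub_app[simp]: "sub (a@b) = sub a @ sub b" unfolding sub_def by simp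
lemma sub_Nil[simp]: "sub [] = []" unfolding sub_def by simp
lemma sub_Cons: "sub (x#w) = sub [x] @ sub w" unfolding sub_def by simp

lemma sub_set: "set w \<subseteq> Y \<Longrightarrow> set (sub w) \<subseteq> X"
  using z_words unfolding sub_def words_def by (induction w) auto

lemma sub_ne: "w \<noteq> [] \<Longrightarrow> sub w \<noteq> []"
  using z_words unfolding sub_def words_def by (cases w) auto

lemma sub_words: "w \<in> words Y \<Longrightarrow> sub w \<in> words X"
  using sub_set sub_ne unfolding words_def by blast

lemma sub_free: "c0 \<notin> set w \<Longrightarrow> sub w = w"
  unfolding sub_def by (induction w) auto

lemma sub_step: assumes w: "w \<in> words Y" and st: "(w,w') \<in> step Q" shows "(sub w, sub w') \<in> cong_rel X R"
proof -
  obtain w1 u v w2 where ww: "w = w1@u@w2" "w' = w1@v@w2" and uv: "(u,v) \<in> Q"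
    using st unfolding step_iff by blast
  have sets: "set w1 \<subseteq> Y" "set u \<subseteq> Y" "set w2 \<subseteq> Y" using w ww unfolding words_def by auto
  have s1: "set (sub w1) \<subseteq> X" "set (sub w2) \<subseteq> X" using sub_set sets by auto
  have core: "(sub u, sub v) \<in> cong_rel X R"
  proof -
    consider "(u,v) \<in> R" | "u = z \<and> v = [c0]" | x where "x \<in> Y" "u = [c0,x] \<and> v = [c0]"
      | x where "x \<in> Y" "u = [x,c0] \<and> v = [c0]"
      using Q_cases[OF uv] by blast
    then show ?thesis
    proof cases
      case 1
      have uvX: "u \<in> words X" "v \<in> words X" using R_words[OF 1] by auto
      then have "c0 \<notin> set u" "c0 \<notin> set v" using c0 unfolding words_def by auto
      then have "sub u = u" "sub v = v" using sub_free by auto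
      moreover have st1: "(u,v) \<in> step R" using stepI[OF 1, of "[]" "[]"] by simp
      moreover have "(u,v) \<in> cong_rel X R" using steps_cong[OF rs r_into_rtrancl[OF st1] uvX(1)] .
      ultimately show ?thesis by simp
    next
      case 2
      have "sub u = z" using sub_free[OF c0_z] 2 by simp
      moreover have "sub v = z" using 2 unfolding sub_def by simp
      ultimately show ?thesis using cong_refl[OF z_words] by simp
    next
      case (3 x)
      have "set (sub [x]) \<subseteq> X" using sub_set[of "[x]"] 3 by simp
      then have "([]@z@sub [x], z) \<in> cong_rel X R" using zabs[of "[]" "sub [x]"] by simp
      moreover have "sub u = z @ sub [x]" "sub v = z" using 3 unfolding sub_def by auto
      ultimately show ?thesis by simp
    next
      case (4 x)
      have "set (sub [x]) \<subseteq> X" using sub_set[of "[x]"] 4 by simp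
      then have "(sub [x]@z@[], z) \<in> cong_rel X R" using zabs[of "sub [x]" "[]"] by simp
      moreover have "sub u = sub [x] @ z" "sub v = z" using 4 unfolding sub_def by auto
      ultimately show ?thesis by simp
    qed
  qed
  show ?thesis using cong_ctx[OF core s1] ww by simp
qed

lemma cong_back: assumes "(u,v) \<in> cong_rel Y Q" shows "(sub u, sub v) \<in> cong_rel X R"
proof -
  let ?E = "(step Q \<union> (step Q)\<inverse>) \<inter> (words Y \<times> words Y)"
  have "(u,v) \<in> ?E\<^sup>*" "u \<in> words Y" using assms unfolding cong_rel_def by auto
  then show ?thesis
  proof (induction rule: rtrancl_induct)
    case base then show ?case using cong_refl sub_words by blast
  next
    case (step y y')
    have yw: "y \<in> words Y" "y' \<in> words Y" using step.hyps(2) by auto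
    have "(sub y, sub y') \<in> cong_rel X R"
    proof (cases "(y,y') \<in> step Q")
      case True then show ?thesis using sub_step[OF yw(1)] by blast
    next
      case False
      then have "(y',y) \<in> step Q" using step.hyps(2) by blast
      then show ?thesis using sub_step[OF yw(2)] cong_sym by blast
    qed
    then show ?case using step.IH step.prems cong_trans by blast
  qed
qed

lemma words_mono: "words X \<subseteq> words Y" unfolding words_def by blast

lemma cong_fwd: assumes "(u,v) \<in> cong_rel X R" shows "(u,v) \<in> cong_rel Y Q"
proof -
  have "(step R \<union> (step R)\<inverse>) \<inter> (words X \<times> words X) \<subseteq> (step Q \<union> (step Q)\<inverse>) \<inter> (words Y \<times> words Y)"
    using step_mono[OF R_sub_Q] words_mono by blast
  then show ?thesis using assms rtrancl_mono words_mono unfolding cong_rel_def by blast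
qed

lemma sub_steps: "set w \<subseteq> Y \<Longrightarrow> (sub w, w) \<in> (step Q)\<^sup>*"
proof (induction w)
  case Nil then show ?case by simp
next
  case (Cons x w)
  have 1: "(sub [x], [x]) \<in> (step Q)\<^sup>*"
  proof (cases "x = c0")
    case True then show ?thesis using z_red by (simp add: sub_def)
  next
    case False then show ?thesis by (simp add: sub_def)
  qed
  have a: "([]@sub [x]@sub w, []@[x]@sub w) \<in> (step Q)\<^sup>*" using steps_ctx[OF 1] by blast
  have "set w \<subseteq> Y" using Cons.prems by simp
  then have "(sub w, w) \<in> (step Q)\<^sup>*" by (rule Cons.IH)
  then have b: "([x]@sub w@[], [x]@w@[]) \<in> (step Q)\<^sup>*" by (rule steps_ctx)
  have "(sub [x] @ sub w, x # w) \<in> (step Q)\<^sup>*" using rtrancl_trans[OF a[simplified] b[simplified]] by simp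
  then show ?case by (subst sub_Cons)
qed

lemma absL: "set w \<subseteq> Y \<Longrightarrow> ([c0]@w, [c0]) \<in> (step Q)\<^sup>*"
proof (induction w)
  case Nil then show ?case by simp
next
  case (Cons x w)
  have "([]@[c0,x]@w, []@[c0]@w) \<in> step Q" using Cons.prems by (intro stepI) (auto simp: R0_def)
  then show ?case using Cons by (simp add: converse_rtrancl_into_rtrancl)
qed

lemma absR: "set w \<subseteq> Y \<Longrightarrow> (w@[c0], [c0]) \<in> (step Q)\<^sup>*"
proof (induction w rule: rev_induct)
  case Nil then show ?case by simp
next
  case (snoc x w)
  have "(w@[x,c0]@[], w@[c0]@[]) \<in> step Q" using snoc.prems by (intro stepI) (auto simp: R0_def)
  then show ?case using snoc by (simp add: converse_rtrancl_into_rtrancl)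
qed

lemma irr_c0: "irreducible Q [c0]"
  unfolding irreducible_def
proof
  assume "\<exists>w'. ([c0], w') \<in> step Q"
  then obtain w1 u v w2 where ww: "[c0] = w1@u@w2" and uv: "(u,v) \<in> Q"
    unfolding step_iff by blast
  have "u \<noteq> []" using rsQ uv unfolding rewriting_system_def words_def by blast
  then have "u = [c0]" using ww by (cases w1; cases u) auto
  have "u \<notin> words X" using \<open>u = [c0]\<close> c0 unfolding words_def by auto
  then have "(u,v) \<notin> R" using R_words by blast
  then show False using Q_cases[OF uv] \<open>u = [c0]\<close> c0_z by auto
qed

lemma main: "rewriting_system Y Q
    \<and> finite_rs Y Q
    \<and> complete Y Q
    \<and> (\<forall>u \<in> words X. \<forall>v \<in> words X.
          (u, v) \<in> cong_rel Y Q \<longleftrightarrow> (u, v) \<in> cong_rel X R)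
    \<and> (\<forall>w \<in> words Y. \<exists>u \<in> words X. (w, u) \<in> cong_rel Y Q)
    \<and> irreducible Q [c0]
    \<and> represents_zero Y Q [c0]
    \<and> ([c0], z) \<in> cong_rel Y Q"
proof (intro conjI)
  show "rewriting_system Y Q" by (rule rsQ)
  show "finite_rs Y Q" by (rule finQ)
  show "complete Y Q" unfolding complete_def using noethQ confQ by blast
  show "\<forall>u \<in> words X. \<forall>v \<in> words X. (u, v) \<in> cong_rel Y Q \<longleftrightarrow> (u, v) \<in> cong_rel X R"
  proof (intro ballI iffI)
    fix u v assume uv: "u \<in> words X" "v \<in> words X" "(u, v) \<in> cong_rel Y Q"
    have "c0 \<notin> set u" "c0 \<notin> set v" using uv c0 unfolding words_def by auto
    then show "(u,v) \<in> cong_rel X R" using cong_back[OF uv(3)] sub_free by simp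
  next
    fix u v assume "(u, v) \<in> cong_rel X R" then show "(u,v) \<in> cong_rel Y Q" by (rule cong_fwd)
  qed
  show "\<forall>w \<in> words Y. \<exists>u \<in> words X. (w, u) \<in> cong_rel Y Q"
  proof
    fix w assume w: "w \<in> words Y"
    have "(sub w, w) \<in> (step Q)\<^sup>*" using sub_steps w unfolding words_def by blast
    moreover have sY: "sub w \<in> words Y" using sub_words[OF w] words_mono by blast
    ultimately have "(sub w, w) \<in> cong_rel Y Q" using steps_cong[OF rsQ] by blast
    then have "(w, sub w) \<in> cong_rel Y Q" by (rule cong_sym)
    then show "\<exists>u \<in> words X. (w, u) \<in> cong_rel Y Q" using sub_words[OF w] by (rule_tac bexI)
  qed
  show "irreducible Q [c0]" by (rule irr_c0)
  show "represents_zero Y Q [c0]"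
    unfolding represents_zero_def
  proof (intro conjI ballI)
    show c0w: "[c0] \<in> words Y" unfolding words_def by simp
    fix w assume w: "w \<in> words Y"
    have sw: "set w \<subseteq> Y" using w unfolding words_def by blast
    have "w@[c0] \<in> words Y" "[c0]@w \<in> words Y" using w c0w unfolding words_def by auto
    then show "(w @ [c0], [c0]) \<in> cong_rel Y Q" "([c0] @ w, [c0]) \<in> cong_rel Y Q"
      using steps_cong[OF rsQ absR[OF sw]] steps_cong[OF rsQ absL[OF sw]] by auto
  qed
  have zY: "z \<in> words Y" using z_words words_mono by blast
  have "(z,[c0]) \<in> cong_rel Y Q" using steps_cong[OF rsQ r_into_rtrancl[OF z_red] zY] .
  then show "([c0], z) \<in> cong_rel Y Q" by (rule cong_sym)
qed

end

theorem proposition2p1: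
  fixes X :: "'a set" and R :: "('a list \<times> 'a list) set" and z :: "'a list" and c0 :: 'a
  assumes "rewriting_system X R" and "finite_rs X R" and "complete X R"
    and "c0 \<notin> X"
    and "represents_zero X R z" and "irreducible R z"
  shows "rewriting_system (X \<union> {c0}) (R0 X R z c0)
    \<and> finite_rs (X \<union> {c0}) (R0 X R z c0)
    \<and> complete (X \<union> {c0}) (R0 X R z c0)
    \<and> (\<forall>u \<in> words X. \<forall>v \<in> words X.
          (u, v) \<in> cong_rel (X \<union> {c0}) (R0 X R z c0) \<longleftrightarrow> (u, v) \<in> cong_rel X R)
    \<and> (\<forall>w \<in> words (X \<union> {c0}). \<exists>u \<in> words X. (w, u) \<in> cong_rel (X \<union> {c0}) (R0 X R z c0))
    \<and> irreducible (R0 X R z c0) [c0]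
    \<and> represents_zero (X \<union> {c0}) (R0 X R z c0) [c0]
    \<and> ([c0], z) \<in> cong_rel (X \<union> {c0}) (R0 X R z c0)"
proof -
  interpret P21 X R z c0 using assms by unfold_locales
  show ?thesis using main by simp
qed

end
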